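(* Let $0\le \alpha<2n$, $1<p_1,p_2<\infty$, $\frac1p=\frac1{p_1}+\frac1{p_2}$, $\frac1q=\frac1p-\frac{\alpha}{n}$, and suppose $q\ge p_2$. Let $w_1,w_2,v$ be weights on $\mathbb{R}^n$ and set $\sigma_i=w_i^{1-p_i'}$, $i=1,2$. Let \[ [\vec{w},v]_{S_{\vec{P},q}}:=\sup_{Q}\frac{\left(\int_{Q}\mathcal{M}_\alpha(\sigma_1 1_Q,\sigma_2 1_Q)^q\, v\,dx\right)^{1/q}}{\sigma_1(Q)^{1/p_1}\sigma_2(Q)^{1/p_2}}, \] supremum over all cubes $Q\subset\mathbb{R}^n$. Then for every dyadic grid $\mathscr{D}$, every $R\in\mathscr{D}$ and every function $f$ with $\operatorname{supp} f\subset R$, \[ \|1_R\,\mathcal{M}_\alpha^{\mathscr{D}}(1_R\sigma_1, f\sigma_2)\|_{L^q(v)}\le C\,[\vec{w},v]_{S_{\vec{P},q}}\,\sigma_1(R)^{1/p_1}\|f\|_{L^{p_2}(\sigma_2)}, \] where $C$ depends only on $n,\alpha,p_1,p_2$.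
   Context: A weight is a non-negative locally integrable function on $\mathbb{R}^n$; $L^p(w)=L^p(\mathbb{R}^n,w\,dx)$, $\sigma(Q)=\int_Q\sigma$, and $p'$ is the dual exponent. A dyadic grid $\mathscr{D}$ is a collection of cubes such that (i) each $Q\in\mathscr{D}$ has sidelength $2^k$ for some $k\in\mathbb{Z}$; (ii) $Q\cap R\in\{Q,R,\emptyset\}$ for all $Q,R\in\mathscr{D}$; (iii) for each $k$, the cubes of sidelength $2^k$ partition $\mathbb{R}^n$. The bilinear fractional maximal operator is $\mathcal{M}_\alpha(f_1,f_2)(x)=\sup_{Q\ni x}\prod_{i=1}^2\frac{1}{|Q|^{1-\alpha/(2n)}}\int_Q|f_i|$ (supremum over all cubes containing $x$), and its dyadic version $\mathcal{M}^{\mathscr{D}}_\alpha$ is defined the same way with the supremum restricted to cubes $Q\in\mathscr{D}$ containing $x$. *)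

theory Defs
  imports "HOL-Analysis.Analysis"
begin

(* Dimension n = CARD('n); points of R^n are vectors real^'n. *)

(* Real power of an extended nonnegative real, for positive exponents r:
   \<infinity>^r = \<infinity>, and x^r the usual real power for finite x (0^r = 0). *)
definition epowr :: "ennreal \<Rightarrow> real \<Rightarrow> ennreal" where
  "epowr x r = (if x = top then top else ennreal (enn2real x powr r))"

definition cube_at :: "real^'n \<Rightarrow> real \<Rightarrow> (real^'n) set" where
  "cube_at a l = {x. \<forall>i. a$i \<le> x$i \<and> x$i < a$i + l}"

definition is_cube :: "(real^'n) set \<Rightarrow> bool" where
  "is_cube Q \<longleftrightarrow> (\<exists>a l. 0 < l \<and> Q = cube_at a l)"

definition dyadic_size_cube :: "int \<Rightarrow> (real^'n) set \<Rightarrow> bool" where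
  "dyadic_size_cube k Q \<longleftrightarrow> (\<exists>a. Q = cube_at a (2 powi k))"

definition dyadic_grid :: "(real^'n) set set \<Rightarrow> bool" where
  "dyadic_grid D \<longleftrightarrow>
     (\<forall>Q\<in>D. \<exists>k::int. dyadic_size_cube k Q) \<and>
     (\<forall>Q\<in>D. \<forall>R\<in>D. Q \<inter> R = Q \<or> Q \<inter> R = R \<or> Q \<inter> R = {}) \<and>
     (\<forall>k::int. \<forall>x. \<exists>!Q. Q \<in> D \<and> dyadic_size_cube k Q \<and> x \<in> Q)"

definition weight :: "(real^'n \<Rightarrow> real) \<Rightarrow> bool" where
  "weight w \<longleftrightarrow> w \<in> borel_measurable lebesgue \<and> (\<forall>x. 0 \<le> w x) \<and>
     (\<forall>K. compact K \<longrightarrow> set_integrable lebesgue K w)"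

definition wmeas :: "(real^'n \<Rightarrow> real) \<Rightarrow> (real^'n) set \<Rightarrow> ennreal" where
  "wmeas w Q = (\<integral>\<^sup>+ x\<in>Q. ennreal (w x) \<partial>lebesgue)"

definition frac_avg :: "real \<Rightarrow> (real^'n) set \<Rightarrow> (real^'n \<Rightarrow> real) \<Rightarrow> ennreal" where
  "frac_avg \<alpha> Q f = (\<integral>\<^sup>+ x\<in>Q. ennreal \<bar>f x\<bar> \<partial>lebesgue)
      / ennreal (measure lebesgue Q powr (1 - \<alpha> / (2 * real CARD('n))))"

definition bmax_frac :: "real \<Rightarrow> (real^'n \<Rightarrow> real) \<Rightarrow> (real^'n \<Rightarrow> real) \<Rightarrow> real^'n \<Rightarrow> ennreal" where
  "bmax_frac \<alpha> f1 f2 x = (SUP Q\<in>{Q. is_cube Q \<and> x \<in> Q}. frac_avg \<alpha> Q f1 * frac_avg \<alpha> Q f2)"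

definition bmax_frac_dyadic :: "(real^'n) set set \<Rightarrow> real \<Rightarrow> (real^'n \<Rightarrow> real) \<Rightarrow> (real^'n \<Rightarrow> real) \<Rightarrow> real^'n \<Rightarrow> ennreal" where
  "bmax_frac_dyadic D \<alpha> f1 f2 x = (SUP Q\<in>{Q. Q \<in> D \<and> x \<in> Q}. frac_avg \<alpha> Q f1 * frac_avg \<alpha> Q f2)"

definition testing_const :: "real \<Rightarrow> real \<Rightarrow> real \<Rightarrow> real \<Rightarrow> (real^'n \<Rightarrow> real) \<Rightarrow> (real^'n \<Rightarrow> real)
     \<Rightarrow> (real^'n \<Rightarrow> real) \<Rightarrow> ennreal" where
  "testing_const \<alpha> p1 p2 q \<sigma>1 \<sigma>2 v =
     (SUP Q\<in>{Q. is_cube Q}.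
        epowr (\<integral>\<^sup>+ x\<in>Q. epowr (bmax_frac \<alpha> (\<lambda>y. \<sigma>1 y * indicator Q y) (\<lambda>y. \<sigma>2 y * indicator Q y) x) q
                            * ennreal (v x) \<partial>lebesgue) (1/q)
        / (epowr (wmeas \<sigma>1 Q) (1/p1) * epowr (wmeas \<sigma>2 Q) (1/p2)))"

definition wLp_norm :: "real \<Rightarrow> (real^'n \<Rightarrow> real) \<Rightarrow> (real^'n \<Rightarrow> real) \<Rightarrow> ennreal" where
  "wLp_norm p w f = epowr (\<integral>\<^sup>+ x. ennreal (\<bar>f x\<bar> powr p * w x) \<partial>lebesgue) (1/p)"

definition dual_exp :: "real \<Rightarrow> real" where
  "dual_exp p = p / (p - 1)"

end

theory Submission
  imports Defs
begin



lemma epowr_top[simp]: "epowr top r = top" by (simp add: epowr_def)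
lemma epowr_ennreal: "0 \<le> x \<Longrightarrow> epowr (ennreal x) r = ennreal (x powr r)"
  by (simp add: epowr_def)
lemma epowr_0[simp]: "epowr 0 r = 0"
  by (simp add: epowr_def)
lemma epowr_1[simp]: "epowr a 1 = a"
  by (cases a rule: ennreal_cases) (auto simp: epowr_ennreal)
lemma epowr_fin: "a < top \<Longrightarrow> epowr a r < top"
  by (cases a rule: ennreal_cases) (auto simp: epowr_ennreal)

lemma epowr_epowr: assumes "0 < r" shows "epowr (epowr a r) s = epowr a (r * s)"
proof (cases a rule: ennreal_cases)
  case (real x)
  then show ?thesis by (simp add: epowr_ennreal powr_powr)
qed simp
lemma epowr_inv: assumes "0 < r" shows "epowr (epowr a r) (1/r) = a"
  using assms by (simp add: epowr_epowr)
lemma epowr_eq_0_iff: assumes "0 < r" shows "epowr a r = 0 \<longleftrightarrow> a = 0"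
proof (cases a rule: ennreal_cases)
  case (real x)
  then show ?thesis by (simp add: epowr_ennreal)
qed simp
lemma epowr_mono: assumes "a \<le> b" "0 < r" shows "epowr a r \<le> epowr b r"
proof (cases b rule: ennreal_cases)
  case (real y)
  then have "a \<noteq> top" using assms(1) by (auto simp: top_unique)
  then obtain x where x: "a = ennreal x" "0 \<le> x" by (cases a rule: ennreal_cases) auto
  then have "x \<le> y" using assms(1) real by simp
  then show ?thesis using real x assms by (simp add: epowr_ennreal powr_mono2)
qed simp

lemma epowr_mult: assumes "0 < r" shows "epowr (a * b) r = epowr a r * epowr b r"
proof (cases a rule: ennreal_cases)
  case (real x)
  note ax = this
  show ?thesis
  proof (cases b rule: ennreal_cases)
    case (real y)
    then show ?thesis using ax
      by (simp add: epowr_ennreal ennreal_mult''[symmetric] powr_mult)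
  next
    case top
    show ?thesis
    proof (cases "x = 0")
      case True then show ?thesis using ax top by simp
    next
      case False
      then have "a * b = top" using ax top by (simp add: ennreal_mult_top)
      moreover have "epowr a r \<noteq> 0" using ax False assms by (simp add: epowr_ennreal)
      ultimately show ?thesis using top by (simp add: ennreal_mult_top)
    qed
  qed
next
  case top
  show ?thesis
  proof (cases "b = 0")
    case True then show ?thesis using top by simp
  next
    case False
    then have "epowr b r \<noteq> 0" using assms epowr_eq_0_iff by blast
    then show ?thesis using top False by (simp add: ennreal_top_mult)
  qed
qed



lemma cube_at_corner: "0 < l \<Longrightarrow> a \<in> cube_at a l"
  by (simp add: cube_at_def)

lemma cube_at_sub_le:
  assumes l: "0 < l" and sub: "cube_at a l \<subseteq> cube_at b m"
  shows "l \<le> m"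
proof (rule ccontr)
  assume "\<not> l \<le> m"
  define t where "t = (max m 0 + l) / 2"
  have t: "0 < t" "t < l" "m < t" using \<open>\<not> l \<le> m\<close> l by (auto simp: t_def)
  define x :: "real^'a" where "x = (\<chi> i. a$i + t)"
  have "x \<in> cube_at a l" using t by (simp add: cube_at_def x_def)
  then have "x \<in> cube_at b m" using sub by auto
  moreover have "a \<in> cube_at b m" using sub cube_at_corner[OF l] by auto
  ultimately have "a$i + t < b$i + m" "b$i \<le> a$i" for i by (auto simp: cube_at_def x_def)
  from this(1)[of undefined] this(2)[of undefined] t show False by linarith
qed

lemma cube_at_sets[measurable]: "cube_at a l \<in> sets lborel"
  unfolding cube_at_def by measurable

lemma cube_at_sets_leb[measurable]: "cube_at a l \<in> sets lebesgue"
  using cube_at_sets by (metis sets_completionI_sets sets_lborel)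

lemma cube_at_cbox: "cube_at a l \<subseteq> cbox a (\<chi> i. a$i + l)"
proof
  fix x assume x: "x \<in> cube_at a l"
  have "a$i \<le> x$i" "x$i < a$i + l" for i using x by (auto simp: cube_at_def)
  then show "x \<in> cbox a (\<chi> i. a$i + l)" by (simp add: mem_box_cart less_imp_le)
qed

lemma cube_at_interior: assumes "0 < l" shows "interior (cube_at a l) \<noteq> {}"
proof -
  have "box a (\<chi> i. a$i + l) \<subseteq> cube_at a l" by (auto simp: cube_at_def mem_box_cart intro: less_imp_le)
  then have "box a (\<chi> i. a$i + l) \<subseteq> interior (cube_at a l)" by (meson interior_maximal open_box)
  moreover have "(\<chi> i. a$i + l/2) \<in> box a (\<chi> i. a$i + l)" using assms by (simp add: mem_box_cart)
  ultimately show ?thesis by blast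
qed




lemma cube_at_lmeas: "cube_at a l \<in> lmeasurable"
  by (rule fmeasurableI2[OF lmeasurable_cbox cube_at_cbox cube_at_sets_leb])

lemma weight_cube_fin:
  assumes w: "weight w" shows "wmeas w (cube_at a l) < \<infinity>"
proof -
  define K where "K = cbox a (\<chi> i. a$i + l)"
  have wm: "w \<in> borel_measurable lebesgue" and nn: "\<And>x. 0 \<le> w x"
    and int: "set_integrable lebesgue K w" using w by (auto simp: weight_def K_def)
  have "(\<integral>\<^sup>+ x. ennreal (norm (indicator K x *\<^sub>R w x)) \<partial>lebesgue) < \<infinity>"
    using int unfolding set_integrable_def by (simp add: integrable_iff_bounded)
  moreover have "wmeas w (cube_at a l) \<le> (\<integral>\<^sup>+ x. ennreal (norm (indicator K x *\<^sub>R w x)) \<partial>lebesgue)"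
    unfolding wmeas_def
  proof (rule nn_integral_mono)
    fix x
    show "ennreal (w x) * indicator (cube_at a l) x \<le> ennreal (norm (indicator K x *\<^sub>R w x))"
      using cube_at_cbox[of a l] nn[of x] unfolding K_def
      by (auto simp: indicator_def)
  qed
  ultimately show ?thesis by (meson order.strict_trans1)
qed

definition dsz :: "(real^'n) set \<Rightarrow> int" where "dsz Q = (SOME k. dyadic_size_cube k Q)"

lemma dsc_pos: "0 < (2::real) powi k" by simp

lemma dsc_le:
  assumes "dyadic_size_cube k Q" "dyadic_size_cube j P" "Q \<subseteq> P"
  shows "k \<le> j"
proof -
  obtain a b where "Q = cube_at a (2 powi k)" "P = cube_at b (2 powi j)"
    using assms by (auto simp: dyadic_size_cube_def)
  then have "(2::real) powi k \<le> 2 powi j" using cube_at_sub_le[OF dsc_pos] assms(3) by blast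
  then show ?thesis using power_int_strict_increasing[of j k "2::real"] by (meson linorder_not_le one_less_numeral_iff semiring_norm(76) leD)
qed

lemma dsc_unique: "dyadic_size_cube k Q \<Longrightarrow> dyadic_size_cube j Q \<Longrightarrow> k = j"
  using dsc_le[of k Q j Q] dsc_le[of j Q k Q] by simp

lemma dsc_ne: "dyadic_size_cube k Q \<Longrightarrow> Q \<noteq> {}"
  using cube_at_corner[OF dsc_pos] by (auto simp: dyadic_size_cube_def)

lemma dsc_cube: "dyadic_size_cube k Q \<Longrightarrow> is_cube Q"
  unfolding dyadic_size_cube_def is_cube_def using dsc_pos by blast

lemma dsc_lmeas: "dyadic_size_cube k Q \<Longrightarrow> Q \<in> lmeasurable"
  unfolding dyadic_size_cube_def using cube_at_lmeas by blast

lemma dsc_sets: "dyadic_size_cube k Q \<Longrightarrow> Q \<in> sets lebesgue"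
  unfolding dyadic_size_cube_def using cube_at_sets_leb by blast

lemma dsc_wfin: "weight w \<Longrightarrow> dyadic_size_cube k Q \<Longrightarrow> wmeas w Q < \<infinity>"
  unfolding dyadic_size_cube_def using weight_cube_fin by blast

context
  fixes D :: "(real^'n) set set"
  assumes dg: "dyadic_grid D"
begin

lemma dg1: "Q \<in> D \<Longrightarrow> \<exists>k. dyadic_size_cube k Q"
proof -
  have "\<forall>Q\<in>D. \<exists>k::int. dyadic_size_cube k Q" using dg unfolding dyadic_grid_def by (rule conjunct1)
  then show "Q \<in> D \<Longrightarrow> \<exists>k. dyadic_size_cube k Q" by (rule bspec)
qed
lemma dg2: "Q \<in> D \<Longrightarrow> R \<in> D \<Longrightarrow> Q \<inter> R = Q \<or> Q \<inter> R = R \<or> Q \<inter> R = {}"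
proof -
  have "\<forall>Q\<in>D. \<forall>R\<in>D. Q \<inter> R = Q \<or> Q \<inter> R = R \<or> Q \<inter> R = {}"
    using dg unfolding dyadic_grid_def by (rule conjunct1[OF conjunct2])
  then show "Q \<in> D \<Longrightarrow> R \<in> D \<Longrightarrow> Q \<inter> R = Q \<or> Q \<inter> R = R \<or> Q \<inter> R = {}" by blast
qed
lemma dg3: "\<exists>!Q. Q \<in> D \<and> dyadic_size_cube k Q \<and> x \<in> Q"
proof -
  have "\<forall>k::int. \<forall>x. \<exists>!Q. Q \<in> D \<and> dyadic_size_cube k Q \<and> x \<in> Q"
    using dg unfolding dyadic_grid_def by (rule conjunct2[OF conjunct2])
  then show ?thesis by blast
qed

lemma dg_size: "Q \<in> D \<Longrightarrow> dyadic_size_cube (dsz Q) Q"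
proof -
  assume "Q \<in> D"
  then have "\<exists>k. dyadic_size_cube k Q" by (rule dg1)
  then show ?thesis unfolding dsz_def by (rule someI_ex)
qed

lemma dg_cube: "Q \<in> D \<Longrightarrow> is_cube Q" using dg_size dsc_cube by blast
lemma dg_lmeas: "Q \<in> D \<Longrightarrow> Q \<in> lmeasurable" using dg_size dsc_lmeas by blast
lemma dg_sets: "Q \<in> D \<Longrightarrow> Q \<in> sets lebesgue" using dg_size dsc_sets by blast
lemma dg_ne: "Q \<in> D \<Longrightarrow> Q \<noteq> {}" using dg_size dsc_ne by blast
lemma dg_wfin: "weight w \<Longrightarrow> Q \<in> D \<Longrightarrow> wmeas w Q < \<infinity>" using dg_size dsc_wfin by blast

lemma dg_nest: "Q \<in> D \<Longrightarrow> P \<in> D \<Longrightarrow> x \<in> Q \<Longrightarrow> x \<in> P \<Longrightarrow> Q \<subseteq> P \<or> P \<subseteq> Q"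
proof -
  assume a: "Q \<in> D" "P \<in> D" "x \<in> Q" "x \<in> P"
  then have "Q \<inter> P \<noteq> {}" by blast
  then show ?thesis using dg2[OF a(1,2)] by blast
qed

lemma dg_eq: "Q \<in> D \<Longrightarrow> P \<in> D \<Longrightarrow> dsz Q = dsz P \<Longrightarrow> x \<in> Q \<Longrightarrow> x \<in> P \<Longrightarrow> Q = P"
proof -
  assume a: "Q \<in> D" "P \<in> D" "dsz Q = dsz P" "x \<in> Q" "x \<in> P"
  have "\<exists>!Q. Q \<in> D \<and> dyadic_size_cube (dsz P) Q \<and> x \<in> Q" by (rule dg3)
  then obtain Q0 where "\<And>y. y \<in> D \<and> dyadic_size_cube (dsz P) y \<and> x \<in> y \<Longrightarrow> y = Q0"
    by (metis (no_types, lifting))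
  moreover have "Q \<in> D \<and> dyadic_size_cube (dsz P) Q \<and> x \<in> Q" using a dg_size[OF a(1)] by simp
  moreover have "P \<in> D \<and> dyadic_size_cube (dsz P) P \<and> x \<in> P" using a dg_size[OF a(2)] by simp
  ultimately show ?thesis by metis
qed

lemma dg_sub_dsz: "Q \<in> D \<Longrightarrow> P \<in> D \<Longrightarrow> Q \<subseteq> P \<Longrightarrow> dsz Q \<le> dsz P"
  using dg_size dsc_le by blast


lemma dg_countable: "countable D"
proof -
  have Deq: "D = (\<Union>k\<in>UNIV. {Q\<in>D. dsz Q = k})" by blast
  have c: "countable {Q\<in>D. dsz Q = k}" for k
  proof (rule countable_disjoint_nonempty_interior_subsets)
    show "pairwise disjnt {Q \<in> D. dsz Q = k}"
      unfolding pairwise_def disjnt_def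
    proof (intro ballI impI)
      fix Q P assume a: "Q \<in> {Q \<in> D. dsz Q = k}" "P \<in> {Q \<in> D. dsz Q = k}" "Q \<noteq> P"
      show "Q \<inter> P = {}"
      proof (rule ccontr)
        assume "Q \<inter> P \<noteq> {}"
        then obtain x where "x \<in> Q" "x \<in> P" by blast
        then have "Q = P" using dg_eq[of Q P x] a by simp
        then show False using a by simp
      qed
    qed
    show "S = {}" if s: "S \<in> {Q \<in> D. dsz Q = k}" "interior S = {}" for S
    proof -
      have "dyadic_size_cube (dsz S) S" using s(1) dg_size by blast
      then obtain a where Sa: "S = cube_at a (2 powi (dsz S))" unfolding dyadic_size_cube_def by blast
      have "interior S \<noteq> {}" using cube_at_interior[OF dsc_pos, of a "dsz S"] Sa by metis
      then show ?thesis using s by simp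
    qed
  qed
  have "countable (\<Union>k\<in>UNIV. {Q\<in>D. dsz Q = k})"
    by (rule countable_UN) (simp_all add: c)
  then show ?thesis using Deq by simp
qed

lemma dg_finite_anc: assumes "Q \<in> D" "R \<in> D" shows "finite {P\<in>D. Q \<subseteq> P \<and> P \<subseteq> R}"
proof -
  obtain x where x: "x \<in> Q" using dg_ne[OF assms(1)] by blast
  let ?A = "{P\<in>D. Q \<subseteq> P \<and> P \<subseteq> R}"
  have "inj_on dsz ?A" unfolding inj_on_def
  proof (intro ballI impI)
    fix P P' assume "P \<in> ?A" "P' \<in> ?A" "dsz P = dsz P'"
    then show "P = P'" using dg_eq[of P P' x] x by auto
  qed
  moreover have "dsz ` ?A \<subseteq> {dsz Q..dsz R}"
  proof
    fix k assume "k \<in> dsz ` ?A"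
    then obtain P where "P \<in> ?A" "k = dsz P" by blast
    then show "k \<in> {dsz Q..dsz R}" using dg_sub_dsz[of Q P] dg_sub_dsz[of P R] assms by auto
  qed
  ultimately show ?thesis by (meson finite_atLeastAtMost_int finite_imageD finite_subset)
qed

end



lemma divide_ennreal_anti:
  assumes "0 \<le> b" "b \<le> a" shows "x / ennreal a \<le> x / ennreal b"
proof (cases "b = 0")
  case True
  then show ?thesis by (cases "x = 0") (auto simp: divide_ennreal_def ennreal_mult_top)
next
  case False
  then have "0 < b" "0 < a" using assms by auto
  then have "inverse (ennreal a) \<le> inverse (ennreal b)"
    using assms by (simp add: inverse_ennreal ennreal_leI le_imp_inverse_le)
  then show ?thesis unfolding divide_ennreal_def by (rule mult_left_mono) simp
qed

lemma divide_le_ennreal_iff: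
  fixes a b c :: ennreal
  assumes "b \<noteq> 0" "b < top" "a / b \<le> c" shows "a \<le> c * b"
proof -
  have "a = a / b * b" using assms by (simp add: ennreal_divide_times)
  also have "\<dots> \<le> c * b" using assms(3) by (rule mult_right_mono) simp
  finally show ?thesis .
qed

lemma single_le_count:
  fixes g :: "'i \<Rightarrow> ennreal"
  assumes "i \<in> I" shows "g i \<le> (\<integral>\<^sup>+j. g j \<partial>count_space I)"
proof -
  have "(\<integral>\<^sup>+j. g i * indicator {i} j \<partial>count_space I) = g i * emeasure (count_space I) {i}"
    using assms by (intro nn_integral_cmult_indicator) auto
  also have "\<dots> = g i" using assms by simp
  finally have "g i = (\<integral>\<^sup>+j. g i * indicator {i} j \<partial>count_space I)" by simp
  also have "\<dots> \<le> (\<integral>\<^sup>+j. g j \<partial>count_space I)"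
    by (intro nn_integral_mono) (auto simp: indicator_def)
  finally show ?thesis .
qed

lemma count_space_mono_set:
  fixes g :: "'i \<Rightarrow> ennreal"
  assumes "A \<subseteq> B" shows "(\<integral>\<^sup>+j. g j \<partial>count_space A) \<le> (\<integral>\<^sup>+j. g j \<partial>count_space B)"
proof -
  have "(\<integral>\<^sup>+j. g j \<partial>count_space A) = (\<integral>\<^sup>+j. g j * indicator A j \<partial>count_space UNIV)"
    by (rule nn_integral_count_space_indicator) simp
  also have "\<dots> \<le> (\<integral>\<^sup>+j. g j * indicator B j \<partial>count_space UNIV)"
    using assms by (intro nn_integral_mono) (auto simp: indicator_def)
  also have "\<dots> = (\<integral>\<^sup>+j. g j \<partial>count_space B)"
    by (rule nn_integral_count_space_indicator[symmetric]) simp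
  finally show ?thesis .
qed

lemma count_space_restrict:
  fixes g :: "'i \<Rightarrow> ennreal"
  shows "(\<integral>\<^sup>+j. g j * indicator (P j) x \<partial>count_space A) = (\<integral>\<^sup>+j. g j \<partial>count_space {j\<in>A. x \<in> P j})"
proof -
  have "(\<integral>\<^sup>+j. g j * indicator (P j) x \<partial>count_space A) = (\<integral>\<^sup>+j. g j * indicator (P j) x * indicator A j \<partial>count_space UNIV)"
    by (rule nn_integral_count_space_indicator) simp
  also have "\<dots> = (\<integral>\<^sup>+j. g j * indicator {j\<in>A. x \<in> P j} j \<partial>count_space UNIV)"
    by (intro nn_integral_cong) (auto simp: indicator_def)
  also have "\<dots> = (\<integral>\<^sup>+j. g j \<partial>count_space {j\<in>A. x \<in> P j})"
    by (rule nn_integral_count_space_indicator[symmetric]) simp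
  finally show ?thesis .
qed

lemma epowr_SUP_le_sum:
  fixes b :: "'i \<Rightarrow> ennreal"
  assumes q: "0 < q"
  shows "epowr (SUP i\<in>I. b i) q \<le> (\<integral>\<^sup>+i. epowr (b i) q \<partial>count_space I)"
proof -
  define S where "S = (\<integral>\<^sup>+i. epowr (b i) q \<partial>count_space I)"
  have "b i \<le> epowr S (1/q)" if "i \<in> I" for i
  proof -
    have "epowr (b i) q \<le> S" unfolding S_def using that by (rule single_le_count)
    then have "epowr (epowr (b i) q) (1/q) \<le> epowr S (1/q)" using q by (intro epowr_mono) auto
    then show ?thesis using q by (simp add: epowr_inv)
  qed
  then have "(SUP i\<in>I. b i) \<le> epowr S (1/q)" by (rule SUP_least)
  then have "epowr (SUP i\<in>I. b i) q \<le> epowr (epowr S (1/q)) q" using q by (rule epowr_mono)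
  also have "\<dots> = S" using q by (simp add: epowr_epowr)
  finally show ?thesis unfolding S_def .
qed

lemma powr_split: assumes "0 \<le> (y::real)" shows "y * y powr (r - 1) = y powr r"
proof (cases "y = 0")
  case False
  have "y powr (1 + (r - 1)) = y powr 1 * y powr (r - 1)" by (rule powr_add)
  then show ?thesis using assms False by simp
qed simp

lemma sum_pow:
  fixes a :: "'i \<Rightarrow> ennreal"
  assumes r: "1 \<le> r"
  shows "(\<integral>\<^sup>+i. epowr (a i) r \<partial>count_space I) \<le> epowr (\<integral>\<^sup>+i. a i \<partial>count_space I) r"
proof (cases "(\<integral>\<^sup>+i. a i \<partial>count_space I) = top")
  case True then show ?thesis by simp
next
  case False
  define S where "S = (\<integral>\<^sup>+i. a i \<partial>count_space I)"
  then obtain s where S: "S = ennreal s" "0 \<le> s" using False by (metis ennreal_cases)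
  have le: "epowr (a i) r \<le> a i * ennreal (s powr (r - 1))" if "i \<in> I" for i
  proof -
    have ai: "a i \<le> S" unfolding S_def using that by (rule single_le_count)
    then obtain y where y: "a i = ennreal y" "0 \<le> y" "y \<le> s" using S
      by (cases "a i" rule: ennreal_cases) (auto simp: top_unique)
    have "y powr r = y * y powr (r - 1)" using y by (simp add: powr_split)
    also have "\<dots> \<le> y * s powr (r - 1)" using y r by (intro mult_left_mono powr_mono2) auto
    finally show ?thesis using y by (simp add: epowr_ennreal ennreal_mult'[symmetric] ennreal_leI)
  qed
  have "(\<integral>\<^sup>+i. epowr (a i) r \<partial>count_space I) \<le> (\<integral>\<^sup>+i. a i * ennreal (s powr (r - 1)) \<partial>count_space I)"
    using le by (intro nn_integral_mono) auto
  also have "\<dots> = S * ennreal (s powr (r - 1))" unfolding S_def by (rule nn_integral_multc) simp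
  also have "\<dots> = epowr S r" using S by (simp add: epowr_ennreal ennreal_mult'[symmetric] powr_split)
  finally show ?thesis unfolding S_def .
qed

lemma epowr_meas[measurable]:
  "f \<in> borel_measurable M \<Longrightarrow> (\<lambda>x. epowr (f x) r) \<in> borel_measurable M"
proof -
  assume f[measurable]: "f \<in> borel_measurable M"
  have [measurable]: "{x \<in> space M. f x = top} \<in> sets M"
    using measurable_equality_set[OF f, of "\<lambda>_. top"] by simp
  show ?thesis unfolding epowr_def by measurable
qed

lemma bmax_dyadic_meas:
  assumes "countable D" "\<And>Q. Q \<in> D \<Longrightarrow> Q \<in> sets lebesgue"
  shows "bmax_frac_dyadic D \<alpha> h1 h2 \<in> borel_measurable lebesgue"
proof -
  have eq: "bmax_frac_dyadic D \<alpha> h1 h2 = (\<lambda>x. SUP Q\<in>D. frac_avg \<alpha> Q h1 * frac_avg \<alpha> Q h2 * indicator Q x)"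
  proof
    fix x
    show "bmax_frac_dyadic D \<alpha> h1 h2 x = (SUP Q\<in>D. frac_avg \<alpha> Q h1 * frac_avg \<alpha> Q h2 * indicator Q x)"
      unfolding bmax_frac_dyadic_def
    proof (rule antisym)
      show "(SUP Q\<in>{Q. Q \<in> D \<and> x \<in> Q}. frac_avg \<alpha> Q h1 * frac_avg \<alpha> Q h2)
          \<le> (SUP Q\<in>D. frac_avg \<alpha> Q h1 * frac_avg \<alpha> Q h2 * indicator Q x)"
      proof (rule SUP_least)
        fix Q assume "Q \<in> {Q. Q \<in> D \<and> x \<in> Q}"
        then show "frac_avg \<alpha> Q h1 * frac_avg \<alpha> Q h2 \<le> (SUP Q\<in>D. frac_avg \<alpha> Q h1 * frac_avg \<alpha> Q h2 * indicator Q x)"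
          by (intro SUP_upper2[of Q]) auto
      qed
      show "(SUP Q\<in>D. frac_avg \<alpha> Q h1 * frac_avg \<alpha> Q h2 * indicator Q x)
          \<le> (SUP Q\<in>{Q. Q \<in> D \<and> x \<in> Q}. frac_avg \<alpha> Q h1 * frac_avg \<alpha> Q h2)"
      proof (rule SUP_least)
        fix Q assume "Q \<in> D"
        then show "frac_avg \<alpha> Q h1 * frac_avg \<alpha> Q h2 * indicator Q x \<le> (SUP Q\<in>{Q. Q \<in> D \<and> x \<in> Q}. frac_avg \<alpha> Q h1 * frac_avg \<alpha> Q h2)"
          by (cases "x \<in> Q") (auto intro: SUP_upper2[of Q])
      qed
    qed
  qed
  show ?thesis unfolding eq using assms
    by (intro borel_measurable_SUP) auto
qed




lemma geom_bound:
  fixes p g w :: real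
  assumes p: "1 < p" and g: "0 \<le> g" and w: "0 \<le> w"
  shows "(\<integral>\<^sup>+(k::int). ennreal (2 powr (real_of_int k * (p - 1))) * ennreal (g * w)
            * (if 2 powr (real_of_int k - 1) < g then 1 else 0) \<partial>count_space UNIV)
         \<le> ennreal (2 powr (p - 1) / (1 - 2 powr (1 - p))) * ennreal (g powr p * w)"
proof (cases "g = 0")
  case True
  have "\<not> 2 powr (real_of_int k - 1) < g" for k using True by simp
  then show ?thesis by simp
next
  case False
  then have g0: "0 < g" using g by simp
  define K where "K = \<lceil>log 2 g\<rceil>"
  define \<rho> :: real where "\<rho> = 2 powr (1 - p)"
  have \<rho>: "0 < \<rho>" "\<rho> < 1" using p by (auto simp: \<rho>_def powr_less_one)
  define h where "h k = ennreal (2 powr (real_of_int k * (p - 1))) * ennreal (g * w)" for k :: int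
  have step1: "ennreal (2 powr (real_of_int k * (p - 1))) * ennreal (g * w)
            * (if 2 powr (real_of_int k - 1) < g then 1 else 0) \<le> h k * indicator {..K} k" for k
  proof (cases "2 powr (real_of_int k - 1) < g")
    case True
    then have "real_of_int k - 1 < log 2 g" using g0 by (simp add: less_log_iff)
    then have "k - 1 < K" unfolding K_def by (simp add: less_ceiling_iff)
    then show ?thesis using True by (simp add: h_def)
  qed simp
  have "(\<integral>\<^sup>+(k::int). h k * indicator {..K} k \<partial>count_space UNIV) = (\<integral>\<^sup>+k. h k \<partial>count_space {..K})"
    by (rule nn_integral_count_space_indicator[symmetric]) simp
  also have "\<dots> = (\<integral>\<^sup>+m. h (K - int m) \<partial>count_space UNIV)"
  proof (rule nn_integral_bij_count_space[symmetric])
    show "bij_betw (\<lambda>m. K - int m) UNIV {..K}"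
      unfolding bij_betw_def
    proof
      show "inj_on (\<lambda>m. K - int m) UNIV" by (auto simp: inj_on_def)
      show "range (\<lambda>m. K - int m) = {..K}"
      proof
        show "range (\<lambda>m. K - int m) \<subseteq> {..K}" by auto
        show "{..K} \<subseteq> range (\<lambda>m. K - int m)"
        proof
          fix k assume "k \<in> {..K}"
          then have "k = K - int (nat (K - k))" by simp
          then show "k \<in> range (\<lambda>m. K - int m)" by blast
        qed
      qed
    qed
  qed
  also have "\<dots> = (\<Sum>m. h (K - int m))" by (rule nn_integral_count_space_nat)
  also have "\<dots> = (\<Sum>m. ennreal (g * w * 2 powr (real_of_int K * (p - 1)) * \<rho> ^ m))"
  proof -
    have "h (K - int m) = ennreal (g * w * 2 powr (real_of_int K * (p - 1)) * \<rho> ^ m)" for m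
    proof -
      have "\<rho> ^ m = 2 powr ((1 - p) * real m)" unfolding \<rho>_def
        by (simp add: powr_realpow[symmetric] powr_powr)
      then have "2 powr (real_of_int (K - int m) * (p - 1)) = 2 powr (real_of_int K * (p - 1)) * \<rho> ^ m"
        by (simp add: powr_add[symmetric] algebra_simps)
      then show ?thesis using g w unfolding h_def
        by (simp add: ennreal_mult'[symmetric] mult_ac)
    qed
    then show ?thesis by simp
  qed
  also have "\<dots> = ennreal (g * w * 2 powr (real_of_int K * (p - 1)) * (1 / (1 - \<rho>)))"
  proof (rule suminf_ennreal_eq)
    show "0 \<le> g * w * 2 powr (real_of_int K * (p - 1)) * \<rho> ^ m" for m using g w \<rho> by simp
    show "(\<lambda>m. g * w * 2 powr (real_of_int K * (p - 1)) * \<rho> ^ m) sums (g * w * 2 powr (real_of_int K * (p - 1)) * (1 / (1 - \<rho>)))"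
      by (rule sums_mult) (rule geometric_sums, use \<rho> in simp)
  qed
  also have "\<dots> \<le> ennreal (2 powr (p - 1) / (1 - \<rho>) * (g powr p * w))"
  proof (rule ennreal_leI)
    have "real_of_int K \<le> log 2 g + 1" unfolding K_def by simp
    then have "2 powr (real_of_int K * (p - 1)) \<le> 2 powr ((log 2 g + 1) * (p - 1))"
      using p by (intro powr_mono mult_right_mono) auto
    also have "\<dots> = 2 powr (log 2 g * (p - 1) + (p - 1))" by (simp add: algebra_simps)
    also have "\<dots> = 2 powr (log 2 g * (p - 1)) * 2 powr (p - 1)" by (rule powr_add)
    also have "\<dots> = (2 powr (log 2 g)) powr (p - 1) * 2 powr (p - 1)" by (simp add: powr_powr)
    also have "\<dots> = g powr (p - 1) * 2 powr (p - 1)" using g0 by simp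
    finally have A: "2 powr (real_of_int K * (p - 1)) \<le> g powr (p - 1) * 2 powr (p - 1)" .
    have B: "g * g powr (p - 1) = g powr p" using g by (rule powr_split)
    have "g * w * 2 powr (real_of_int K * (p - 1)) \<le> g * w * (g powr (p - 1) * 2 powr (p - 1))"
      using A g w by (intro mult_left_mono) auto
    also have "\<dots> = 2 powr (p - 1) * (g powr p * w)" using B by (simp add: algebra_simps)
    finally have "g * w * 2 powr (real_of_int K * (p - 1)) \<le> 2 powr (p - 1) * (g powr p * w)" .
    then have "g * w * 2 powr (real_of_int K * (p - 1)) * (1 / (1 - \<rho>)) \<le> 2 powr (p - 1) * (g powr p * w) * (1 / (1 - \<rho>))"
      using \<rho> by (intro mult_right_mono) auto
    then show "g * w * 2 powr (real_of_int K * (p - 1)) * (1 / (1 - \<rho>)) \<le> 2 powr (p - 1) / (1 - \<rho>) * (g powr p * w)"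
      by (simp add: field_simps)
  qed
  also have "\<dots> = ennreal (2 powr (p - 1) / (1 - 2 powr (1 - p))) * ennreal (g powr p * w)"
    using \<rho> by (simp add: \<rho>_def ennreal_mult'[symmetric] ennreal_mult)
  finally have eq: "(\<integral>\<^sup>+(k::int). h k * indicator {..K} k \<partial>count_space UNIV) \<le> ennreal (2 powr (p - 1) / (1 - 2 powr (1 - p))) * ennreal (g powr p * w)" .
  have "(\<integral>\<^sup>+(k::int). ennreal (2 powr (real_of_int k * (p - 1))) * ennreal (g * w)
            * (if 2 powr (real_of_int k - 1) < g then 1 else 0) \<partial>count_space UNIV)
        \<le> (\<integral>\<^sup>+(k::int). h k * indicator {..K} k \<partial>count_space UNIV)"
    by (intro nn_integral_mono step1)
  then show ?thesis using eq by (rule order.trans)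
qed




locale mainloc =
  fixes \<alpha> q p1 p2 :: real
    and s1 s2 v f :: "real^'n \<Rightarrow> real"
    and D :: "(real^'n) set set" and R :: "(real^'n) set"
  assumes a0: "0 \<le> \<alpha>" and a1: "\<alpha> < 2 * real CARD('n)"
    and p1: "1 < p1" and p2: "1 < p2" and q: "p2 \<le> q"
    and s1w: "weight s1" and s2w: "weight s2" and vw: "weight v"
    and dg: "dyadic_grid D" and RD: "R \<in> D"
    and fm: "f \<in> borel_measurable lebesgue" and fR: "\<And>x. x \<notin> R \<Longrightarrow> f x = 0"

context mainloc
begin

lemma s1m[measurable]: "s1 \<in> borel_measurable lebesgue" using s1w by (simp add: weight_def)
lemma s2m[measurable]: "s2 \<in> borel_measurable lebesgue" using s2w by (simp add: weight_def)
lemma vm[measurable]: "v \<in> borel_measurable lebesgue" using vw by (simp add: weight_def)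
lemma fm'[measurable]: "f \<in> borel_measurable lebesgue" by (rule fm)
lemma s1nn: "0 \<le> s1 x" using s1w by (simp add: weight_def)
lemma s2nn: "0 \<le> s2 x" using s2w by (simp add: weight_def)
lemma q0: "0 < q" using p2 q by simp
lemma epos: "0 < 1 - \<alpha> / (2 * real CARD('n))" using a1 by (simp add: field_simps)

definition G :: "(real^'n) set \<Rightarrow> ennreal" where
  "G Q = (\<integral>\<^sup>+y\<in>Q. ennreal \<bar>f y * s2 y\<bar> \<partial>lebesgue)"
definition big :: "int \<Rightarrow> (real^'n) set \<Rightarrow> bool" where
  "big k Q \<longleftrightarrow> ennreal (2 powr real_of_int k) * wmeas s2 Q < G Q"
definition Sk :: "int \<Rightarrow> (real^'n) set set" where
  "Sk k = {P. P \<in> D \<and> P \<subseteq> R \<and> big k P \<and> (\<forall>P'. P' \<in> D \<and> P \<subseteq> P' \<and> P' \<subseteq> R \<and> big k P' \<longrightarrow> P' = P)}"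
definition II :: "(int \<times> (real^'n) set) set" where
  "II = {(k, P). P \<in> Sk k}"
definition MD :: "(real^'n) set \<Rightarrow> real^'n \<Rightarrow> ennreal" where
  "MD P = bmax_frac_dyadic D \<alpha> (\<lambda>y. s1 y * indicator P y) (\<lambda>y. s2 y * indicator P y)"

lemma Sk_cover:
  assumes Q: "Q \<in> D" "Q \<subseteq> R" "big k Q" shows "\<exists>P. P \<in> Sk k \<and> Q \<subseteq> P"
proof -
  define A where "A = {P\<in>D. Q \<subseteq> P \<and> P \<subseteq> R \<and> big k P}"
  have "A \<subseteq> {P\<in>D. Q \<subseteq> P \<and> P \<subseteq> R}" unfolding A_def by blast
  then have "finite A" using dg_finite_anc[OF dg Q(1) RD] by (rule finite_subset)
  moreover have "Q \<in> A" using Q unfolding A_def by blast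
  ultimately obtain m where m: "m \<in> A" "\<And>b. b \<in> A \<Longrightarrow> m \<subseteq> b \<Longrightarrow> m = b"
    using finite_has_maximal[of A] by blast
  have "m \<in> Sk k" unfolding Sk_def
  proof (intro CollectI conjI allI impI)
    show "m \<in> D" "m \<subseteq> R" "big k m" using m(1) unfolding A_def by auto
    fix P' assume "P' \<in> D \<and> m \<subseteq> P' \<and> P' \<subseteq> R \<and> big k P'"
    moreover have "Q \<subseteq> m" using m(1) unfolding A_def by auto
    ultimately have "P' \<in> A" "m \<subseteq> P'" unfolding A_def by auto
    then show "P' = m" using m(2) by metis
  qed
  moreover have "Q \<subseteq> m" using m(1) unfolding A_def by auto
  ultimately show ?thesis by blast
qed

lemma Sk_disj:
  assumes "P \<in> Sk k" "P' \<in> Sk k" "x \<in> P" "x \<in> P'" shows "P = P'"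
proof -
  have PD: "P \<in> D" "P' \<in> D" using assms(1,2) unfolding Sk_def by auto
  then have "P \<subseteq> P' \<or> P' \<subseteq> P" using dg_nest[OF dg] assms(3,4) by blast
  then show ?thesis
  proof
    assume "P \<subseteq> P'"
    then show ?thesis using assms(1,2) unfolding Sk_def by auto
  next
    assume "P' \<subseteq> P"
    then show ?thesis using assms(1,2) unfolding Sk_def by auto
  qed
qed

lemma Sk_D: "P \<in> Sk k \<Longrightarrow> P \<in> D" and Sk_R: "P \<in> Sk k \<Longrightarrow> P \<subseteq> R" and Sk_big: "P \<in> Sk k \<Longrightarrow> big k P"
  unfolding Sk_def by auto

lemma II_countable: "countable II"
proof -
  have "II \<subseteq> (SIGMA k:UNIV. D)" unfolding II_def using Sk_D by auto
  moreover have "countable (SIGMA k:(UNIV::int set). D)"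
    using dg_countable[OF dg] by (intro countable_SIGMA) auto
  ultimately show ?thesis by (rule countable_subset)
qed

lemma MD_meas[measurable]: "MD P \<in> borel_measurable lebesgue"
  unfolding MD_def using dg_countable[OF dg] dg_sets[OF dg] by (rule bmax_dyadic_meas)

lemma fa_shrink:
  assumes Q: "Q \<in> D" and sub: "R \<subseteq> Q" and h: "\<And>y. y \<notin> R \<Longrightarrow> h y = 0"
  shows "frac_avg \<alpha> Q h \<le> frac_avg \<alpha> R h"
proof -
  have num: "(\<integral>\<^sup>+y\<in>Q. ennreal \<bar>h y\<bar> \<partial>lebesgue) = (\<integral>\<^sup>+y\<in>R. ennreal \<bar>h y\<bar> \<partial>lebesgue)"
  proof (rule nn_integral_cong)
    fix y show "ennreal \<bar>h y\<bar> * indicator Q y = ennreal \<bar>h y\<bar> * indicator R y"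
      using sub h[of y] by (cases "y \<in> R") (auto simp: indicator_def)
  qed
  have "measure lebesgue R \<le> measure lebesgue Q"
    using sub dg_sets[OF dg RD] dg_lmeas[OF dg Q] by (rule measure_mono_fmeasurable)
  then have "measure lebesgue R powr (1 - \<alpha> / (2 * real CARD('n))) \<le> measure lebesgue Q powr (1 - \<alpha> / (2 * real CARD('n)))"
    using epos by (intro powr_mono2) auto
  then show ?thesis unfolding frac_avg_def num
    by (intro divide_ennreal_anti) auto
qed

lemma W2_zero_G:
  assumes Q: "Q \<in> sets lebesgue" and W: "wmeas s2 Q = 0" shows "G Q = 0"
proof -
  have "AE y in lebesgue. ennreal (s2 y) * indicator Q y = 0"
    using W unfolding wmeas_def by (subst nn_integral_0_iff_AE[symmetric]) (use Q in auto)
  then have "AE y in lebesgue. ennreal \<bar>f y * s2 y\<bar> * indicator Q y = 0"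
  proof (rule eventually_mono)
    fix y assume "ennreal (s2 y) * indicator Q y = 0"
    then have "y \<notin> Q \<or> s2 y = 0" using s2nn[of y] by (auto simp: indicator_def)
    then show "ennreal \<bar>f y * s2 y\<bar> * indicator Q y = 0" by (auto simp: indicator_def)
  qed
  then show ?thesis unfolding G_def by (subst nn_integral_0_iff_AE) (use Q in auto)
qed

lemma MD_lower:
  assumes "Q \<in> D" "x \<in> Q"
  shows "frac_avg \<alpha> Q (\<lambda>y. s1 y * indicator P y) * frac_avg \<alpha> Q (\<lambda>y. s2 y * indicator P y) \<le> MD P x"
  unfolding MD_def bmax_frac_dyadic_def using assms by (intro SUP_upper) auto

end



lemma unbounded_top:
  fixes c \<Phi> :: ennreal
  assumes c: "0 < c" and le: "\<And>k::int. ennreal (2 powr real_of_int (k + 1)) * c \<le> \<Phi>"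
  shows "\<Phi> = top"
proof (rule ccontr)
  assume "\<Phi> \<noteq> top"
  then obtain \<phi> where \<phi>: "\<Phi> = ennreal \<phi>" "0 \<le> \<phi>" by (cases \<Phi> rule: ennreal_cases) auto
  have "c \<le> \<Phi>" using le[of "-1"] by simp
  then obtain \<gamma> where \<gamma>: "c = ennreal \<gamma>" "0 < \<gamma>" using c \<phi>
    by (cases c rule: ennreal_cases) (auto simp: top_unique)
  define n where "n = nat \<lceil>\<phi> / \<gamma>\<rceil>"
  have "\<phi> / \<gamma> \<le> real n" unfolding n_def by linarith
  also have "real n < 2 ^ (n + 1)"
  proof -
    have "n + 1 < 2 ^ (n + 1)" by (rule less_exp)
    then have "real (n + 1) < real (2 ^ (n + 1))" by (simp only: of_nat_less_iff)
    then show ?thesis by simp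
  qed
  also have "(2::real) ^ (n + 1) = 2 powr real_of_int (int n + 1)"
  proof -
    have e: "real_of_int (int n + 1) = real (n + 1)" by simp
    show ?thesis unfolding e by (rule powr_realpow[symmetric]) simp
  qed
  finally have A: "\<phi> < 2 powr real_of_int (int n + 1) * \<gamma>" using \<gamma> by (simp add: field_simps)
  have "ennreal (2 powr real_of_int (int n + 1)) * c \<le> \<Phi>" by (rule le)
  then have "2 powr real_of_int (int n + 1) * \<gamma> \<le> \<phi>" using \<gamma> \<phi>
    by (simp add: ennreal_mult''[symmetric])
  then show False using A by simp
qed

context mainloc
begin

definition Phi :: "real^'n \<Rightarrow> ennreal" where
  "Phi x = (SUP i\<in>II. ennreal (2 powr real_of_int (fst i + 1)) * MD (snd i) x * indicator (snd i) x)"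

definition dQ :: "(real^'n) set \<Rightarrow> ennreal" where
  "dQ Q = ennreal (measure lebesgue Q powr (1 - \<alpha> / (2 * real CARD('n))))"

lemma fa1_eq:
  assumes "Q \<subseteq> P" "P \<subseteq> R"
  shows "frac_avg \<alpha> Q (\<lambda>y. indicator R y * s1 y) = frac_avg \<alpha> Q (\<lambda>y. s1 y * indicator P y)"
  unfolding frac_avg_def
proof -
  have "(\<integral>\<^sup>+y\<in>Q. ennreal \<bar>indicator R y * s1 y\<bar> \<partial>lebesgue) = (\<integral>\<^sup>+y\<in>Q. ennreal \<bar>s1 y * indicator P y\<bar> \<partial>lebesgue)"
    using assms by (intro nn_integral_cong) (auto simp: indicator_def)
  then show "(\<integral>\<^sup>+y\<in>Q. ennreal \<bar>indicator R y * s1 y\<bar> \<partial>lebesgue) / ennreal (measure lebesgue Q powr (1 - \<alpha> / (2 * real CARD('n)))) =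
    (\<integral>\<^sup>+y\<in>Q. ennreal \<bar>s1 y * indicator P y\<bar> \<partial>lebesgue) / ennreal (measure lebesgue Q powr (1 - \<alpha> / (2 * real CARD('n))))"
    by simp
qed

lemma fa2_eq:
  assumes "Q \<subseteq> P"
  shows "frac_avg \<alpha> Q (\<lambda>y. s2 y * indicator P y) = wmeas s2 Q / dQ Q"
proof -
  have "(\<integral>\<^sup>+y\<in>Q. ennreal \<bar>s2 y * indicator P y\<bar> \<partial>lebesgue) = wmeas s2 Q"
    unfolding wmeas_def using assms s2nn by (intro nn_integral_cong) (auto simp: indicator_def)
  then show ?thesis unfolding frac_avg_def dQ_def by simp
qed

lemma faf_eq: "frac_avg \<alpha> Q (\<lambda>y. f y * s2 y) = G Q / dQ Q"
  unfolding frac_avg_def dQ_def G_def by simp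

lemma Phi_lower:
  assumes P: "P \<in> Sk k" and Q: "Q \<in> D" "Q \<subseteq> P" "x \<in> Q"
  shows "ennreal (2 powr real_of_int (k + 1)) * (frac_avg \<alpha> Q (\<lambda>y. indicator R y * s1 y) * (wmeas s2 Q / dQ Q)) \<le> Phi x"
proof -
  have eqA: "frac_avg \<alpha> Q (\<lambda>y. indicator R y * s1 y) * (wmeas s2 Q / dQ Q)
      = frac_avg \<alpha> Q (\<lambda>y. s1 y * indicator P y) * frac_avg \<alpha> Q (\<lambda>y. s2 y * indicator P y)"
    using fa1_eq[OF Q(2) Sk_R[OF P]] fa2_eq[OF Q(2)] by simp
  have le1: "frac_avg \<alpha> Q (\<lambda>y. s1 y * indicator P y) * frac_avg \<alpha> Q (\<lambda>y. s2 y * indicator P y) \<le> MD P x"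
    using Q by (intro MD_lower) auto
  have le: "frac_avg \<alpha> Q (\<lambda>y. indicator R y * s1 y) * (wmeas s2 Q / dQ Q) \<le> MD P x"
    using eqA le1 by simp
  have "x \<in> P" using Q by auto
  then have "ennreal (2 powr real_of_int (k + 1)) * (frac_avg \<alpha> Q (\<lambda>y. indicator R y * s1 y) * (wmeas s2 Q / dQ Q))
      \<le> ennreal (2 powr real_of_int (k + 1)) * MD P x * indicator P x"
    using le by (simp add: mult_left_mono)
  also have "\<dots> \<le> Phi x" unfolding Phi_def
    using P by (intro SUP_upper2[of "(k, P)"]) (auto simp: II_def)
  finally show ?thesis .
qed

lemma main_pointwise:
  assumes Q: "Q \<in> D" "Q \<subseteq> R" "x \<in> Q"
  shows "frac_avg \<alpha> Q (\<lambda>y. indicator R y * s1 y) * frac_avg \<alpha> Q (\<lambda>y. f y * s2 y) \<le> Phi x"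
proof -
  define A1 where "A1 = frac_avg \<alpha> Q (\<lambda>y. indicator R y * s1 y)"
  have dfin: "dQ Q < top" unfolding dQ_def by simp
  have Wfin: "wmeas s2 Q < top" using dg_wfin[OF dg s2w Q(1)] by simp
  show ?thesis unfolding faf_eq A1_def[symmetric]
  proof (cases "G Q = 0")
    case True then show "A1 * (G Q / dQ Q) \<le> Phi x" by simp
  next
    case Gnz: False
    then have Wnz: "wmeas s2 Q \<noteq> 0" using W2_zero_G[OF dg_sets[OF dg Q(1)]] by blast
    show "A1 * (G Q / dQ Q) \<le> Phi x"
    proof (cases "G Q = top")
      case True
      show ?thesis
      proof (cases "A1 = 0")
        case True then show ?thesis by simp
      next
        case A1nz: False
        have cpos: "0 < A1 * (wmeas s2 Q / dQ Q)"
          using A1nz Wnz dfin by (auto simp: ennreal_zero_less_mult_iff divide_ennreal_def ennreal_inverse_positive zero_less_iff_neq_zero)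
        have "ennreal (2 powr real_of_int (k + 1)) * (A1 * (wmeas s2 Q / dQ Q)) \<le> Phi x" for k
        proof -
          have "ennreal (2 powr real_of_int k) * wmeas s2 Q < top" using Wfin
            by (simp add: ennreal_mult_less_top)
          then have "big k Q" unfolding big_def using True by simp
          then obtain P where "P \<in> Sk k" "Q \<subseteq> P" using Sk_cover Q by blast
          then show ?thesis unfolding A1_def using Phi_lower Q by blast
        qed
        then have "Phi x = top" using cpos by (intro unbounded_top) auto
        then show ?thesis by simp
      qed
    next
      case Gfin: False
      define gq where "gq = enn2real (G Q)"
      define wq where "wq = enn2real (wmeas s2 Q)"
      have gq: "G Q = ennreal gq" "0 < gq" using Gnz Gfin unfolding gq_def
        by (auto simp: enn2real_positive_iff top.not_eq_extremum zero_less_iff_neq_zero)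
      have wq: "wmeas s2 Q = ennreal wq" "0 < wq" using Wnz Wfin unfolding wq_def
        by (auto simp: enn2real_positive_iff zero_less_iff_neq_zero)
      define r where "r = gq / wq"
      have r: "0 < r" using gq wq unfolding r_def by simp
      define k where "k = \<lceil>log 2 r\<rceil> - 1"
      have k1: "real_of_int k < log 2 r" unfolding k_def by linarith
      then have k1': "2 powr real_of_int k < r" using r by (simp add: less_log_iff)
      have "log 2 r \<le> real_of_int (k + 1)" unfolding k_def by simp
      then have "2 powr (log 2 r) \<le> 2 powr real_of_int (k + 1)" by (intro powr_mono) auto
      then have k2': "r \<le> 2 powr real_of_int (k + 1)" using r by simp
      have "2 powr real_of_int k * wq < gq" using k1' wq unfolding r_def by (simp add: field_simps)
      then have "big k Q" unfolding big_def using gq wq by (simp add: ennreal_mult''[symmetric] ennreal_lessI)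
      then obtain P where P: "P \<in> Sk k" "Q \<subseteq> P" using Sk_cover Q by blast
      have "gq \<le> 2 powr real_of_int (k + 1) * wq" using k2' wq unfolding r_def by (simp add: field_simps)
      then have "G Q \<le> ennreal (2 powr real_of_int (k + 1)) * wmeas s2 Q"
        using gq wq by (simp add: ennreal_mult''[symmetric] ennreal_leI)
      then have "A1 * (G Q / dQ Q) \<le> A1 * (ennreal (2 powr real_of_int (k + 1)) * wmeas s2 Q / dQ Q)"
        by (intro mult_left_mono divide_right_mono_ennreal) auto
      also have "\<dots> = ennreal (2 powr real_of_int (k + 1)) * (A1 * (wmeas s2 Q / dQ Q))"
        by (simp add: ennreal_times_divide mult_ac)
      also have "\<dots> \<le> Phi x" unfolding A1_def using Phi_lower P Q by blast
      finally show ?thesis .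
    qed
  qed
qed

lemma B_le_Phi:
  assumes x: "x \<in> R"
  shows "bmax_frac_dyadic D \<alpha> (\<lambda>y. indicator R y * s1 y) (\<lambda>y. f y * s2 y) x \<le> Phi x"
  unfolding bmax_frac_dyadic_def
proof (rule SUP_least)
  fix Q assume "Q \<in> {Q. Q \<in> D \<and> x \<in> Q}"
  then have Q: "Q \<in> D" "x \<in> Q" by auto
  then have "Q \<subseteq> R \<or> R \<subseteq> Q" using dg_nest[OF dg Q(1) RD Q(2) x] by blast
  then show "frac_avg \<alpha> Q (\<lambda>y. indicator R y * s1 y) * frac_avg \<alpha> Q (\<lambda>y. f y * s2 y) \<le> Phi x"
  proof
    assume "Q \<subseteq> R" then show ?thesis using main_pointwise Q by blast
  next
    assume RQ: "R \<subseteq> Q"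
    have "frac_avg \<alpha> Q (\<lambda>y. indicator R y * s1 y) * frac_avg \<alpha> Q (\<lambda>y. f y * s2 y)
       \<le> frac_avg \<alpha> R (\<lambda>y. indicator R y * s1 y) * frac_avg \<alpha> R (\<lambda>y. f y * s2 y)"
      using fa_shrink[OF Q(1) RQ, of "\<lambda>y. indicator R y * s1 y"] fa_shrink[OF Q(1) RQ, of "\<lambda>y. f y * s2 y"] fR
      by (intro mult_mono) auto
    also have "\<dots> \<le> Phi x" using main_pointwise[OF RD _ x] by simp
    finally show ?thesis .
  qed
qed

end



context mainloc
begin

definition TT :: ennreal where "TT = testing_const \<alpha> p1 p2 q s1 s2 v"

lemma fa_zero:
  assumes s: "\<And>y. 0 \<le> s y" and W: "wmeas s P = 0"
  shows "frac_avg \<alpha> Q (\<lambda>y. s y * indicator P y) = 0"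
proof -
  have "(\<integral>\<^sup>+y\<in>Q. ennreal \<bar>s y * indicator P y\<bar> \<partial>lebesgue) \<le> wmeas s P"
    unfolding wmeas_def using s by (intro nn_integral_mono) (auto simp: indicator_def)
  then show ?thesis unfolding frac_avg_def using W by simp
qed

lemma MD_zero:
  assumes "wmeas s1 P = 0 \<or> wmeas s2 P = 0" shows "MD P x = 0"
  unfolding MD_def bmax_frac_dyadic_def
proof -
  have "frac_avg \<alpha> Q (\<lambda>y. s1 y * indicator P y) * frac_avg \<alpha> Q (\<lambda>y. s2 y * indicator P y) = 0" for Q
    using assms fa_zero[of s1 P Q] fa_zero[of s2 P Q] s1nn s2nn by auto
  then show "(SUP Q\<in>{Q. Q \<in> D \<and> x \<in> Q}. frac_avg \<alpha> Q (\<lambda>y. s1 y * indicator P y) * frac_avg \<alpha> Q (\<lambda>y. s2 y * indicator P y)) = 0"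
    by (intro antisym SUP_least) auto
qed

lemma MD_le_M: "P \<in> D \<Longrightarrow> MD P x \<le> bmax_frac \<alpha> (\<lambda>y. s1 y * indicator P y) (\<lambda>y. s2 y * indicator P y) x"
  unfolding MD_def bmax_frac_dyadic_def bmax_frac_def
  by (rule SUP_subset_mono) (auto dest: dg_cube[OF dg])

lemma testing_P:
  assumes P: "P \<in> D"
  shows "(\<integral>\<^sup>+x\<in>P. epowr (MD P x) q * ennreal (v x) \<partial>lebesgue)
         \<le> epowr TT q * epowr (wmeas s1 P) (q / p1) * epowr (wmeas s2 P) (q / p2)"
proof (cases "wmeas s1 P = 0 \<or> wmeas s2 P = 0")
  case True
  then show ?thesis using MD_zero[OF True] q0 by simp
next
  case False
  define N where "N = (\<integral>\<^sup>+x\<in>P. epowr (bmax_frac \<alpha> (\<lambda>y. s1 y * indicator P y) (\<lambda>y. s2 y * indicator P y) x) q * ennreal (v x) \<partial>lebesgue)"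
  define Den where "Den = epowr (wmeas s1 P) (1/p1) * epowr (wmeas s2 P) (1/p2)"
  have le1: "(\<integral>\<^sup>+x\<in>P. epowr (MD P x) q * ennreal (v x) \<partial>lebesgue) \<le> N"
    unfolding N_def using MD_le_M[OF P] q0
    by (intro nn_integral_mono mult_right_mono epowr_mono) auto
  have "epowr N (1/q) / Den \<le> TT"
    unfolding TT_def testing_const_def N_def Den_def
    using dg_cube[OF dg P] by (intro SUP_upper2[of P]) auto
  moreover have "Den \<noteq> 0" unfolding Den_def using False p1 p2
    by (simp add: epowr_eq_0_iff)
  moreover have "Den < top" unfolding Den_def using dg_wfin[OF dg s1w P] dg_wfin[OF dg s2w P]
    by (simp add: epowr_fin ennreal_mult_less_top)
  ultimately have "epowr N (1/q) \<le> TT * Den" by (intro divide_le_ennreal_iff)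
  then have "epowr (epowr N (1/q)) q \<le> epowr (TT * Den) q" using q0 by (intro epowr_mono) auto
  then have "N \<le> epowr (TT * Den) q" using q0 by (simp add: epowr_epowr)
  also have "\<dots> = epowr TT q * epowr (wmeas s1 P) (q / p1) * epowr (wmeas s2 P) (q / p2)"
    unfolding Den_def using q0 p1 p2 by (simp add: epowr_mult epowr_epowr mult.assoc)
  finally show ?thesis using le1 by simp
qed

definition psi :: "int \<Rightarrow> real^'n \<Rightarrow> ennreal" where
  "psi k x = ennreal (2 powr (real_of_int k * (p2 - 1))) * ennreal (\<bar>f x\<bar> * s2 x)
             * (if 2 powr (real_of_int k - 1) < \<bar>f x\<bar> then 1 else 0)"

lemma psi_meas[measurable]: "psi k \<in> borel_measurable lebesgue"
  unfolding psi_def by measurable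

lemma weak_P:
  assumes P: "P \<in> Sk k"
  shows "ennreal (2 powr (real_of_int (k + 1) * p2)) * wmeas s2 P
         \<le> ennreal (2 powr (p2 + 1)) * (\<integral>\<^sup>+x\<in>P. psi k x \<partial>lebesgue)"
proof -
  define lam :: real where "lam = 2 powr (real_of_int k - 1)"
  have lam: "0 < lam" unfolding lam_def by simp
  define W where "W = wmeas s2 P"
  define X where "X = (\<integral>\<^sup>+x\<in>P. ennreal (\<bar>f x\<bar> * s2 x) * (if lam < \<bar>f x\<bar> then 1 else 0) \<partial>lebesgue)"
  have PD: "P \<in> D" using Sk_D[OF P] .
  have Wfin: "W < top" unfolding W_def using dg_wfin[OF dg s2w PD] by simp
  have Psets[measurable]: "P \<in> sets lebesgue" using dg_sets[OF dg PD] .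
  have big: "ennreal (2 powr real_of_int k) * W < G P" using Sk_big[OF P] unfolding big_def W_def .
  have "G P \<le> (\<integral>\<^sup>+x. ennreal (\<bar>f x\<bar> * s2 x) * (if lam < \<bar>f x\<bar> then 1 else 0) * indicator P x
                       + ennreal lam * (ennreal (s2 x) * indicator P x) \<partial>lebesgue)"
    unfolding G_def
  proof (rule nn_integral_mono)
    fix x
    show "ennreal \<bar>f x * s2 x\<bar> * indicator P x \<le> ennreal (\<bar>f x\<bar> * s2 x) * (if lam < \<bar>f x\<bar> then 1 else 0) * indicator P x
                       + ennreal lam * (ennreal (s2 x) * indicator P x)"
    proof (cases "lam < \<bar>f x\<bar>")
      case True then show ?thesis using s2nn[of x] by (simp add: abs_mult)
    next
      case False
      then have "\<bar>f x\<bar> * s2 x \<le> lam * s2 x" using s2nn[of x] by (intro mult_right_mono) auto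
      then have "ennreal \<bar>f x * s2 x\<bar> \<le> ennreal lam * ennreal (s2 x)"
        using s2nn[of x] lam by (simp add: abs_mult ennreal_mult''[symmetric] ennreal_leI)
      then show ?thesis using False by (auto simp: indicator_def)
    qed
  qed
  also have "\<dots> = X + ennreal lam * W"
    unfolding X_def W_def wmeas_def
    by (subst nn_integral_add) (auto simp: nn_integral_cmult)
  finally have GX: "G P \<le> X + ennreal lam * W" .
  have two: "2 powr real_of_int k = 2 * lam" unfolding lam_def
    by (simp add: powr_diff)
  have "ennreal lam * W + ennreal lam * W = ennreal (2 powr real_of_int k) * W"
    unfolding two using lam by (simp add: ennreal_mult''[symmetric] distrib_right[symmetric] ennreal_plus[symmetric] ring_distribs)
  also have "\<dots> < X + ennreal lam * W" using big GX by (rule order.strict_trans2)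
  finally have "ennreal lam * W + ennreal lam * W < ennreal lam * W + X" by (simp add: add.commute)
  then have lamW: "ennreal lam * W \<le> X" using Wfin
    by (subst (asm) ennreal_add_left_cancel_less) auto
  define c where "c = 2 powr (real_of_int (k + 1) * p2) / lam"
  have c: "0 \<le> c" unfolding c_def using lam by simp
  have "ennreal (2 powr (real_of_int (k + 1) * p2)) * W = ennreal c * (ennreal lam * W)"
    unfolding c_def using lam by (simp add: ennreal_mult''[symmetric] mult.assoc[symmetric])
  also have "\<dots> \<le> ennreal c * X" using lamW by (rule mult_left_mono) simp
  also have "c = 2 powr (p2 + 1) * 2 powr (real_of_int k * (p2 - 1))"
  proof -
    have "c = 2 powr (real_of_int (k + 1) * p2 - (real_of_int k - 1))" unfolding c_def lam_def by (simp add: powr_diff)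
    also have "real_of_int (k + 1) * p2 - (real_of_int k - 1) = (p2 + 1) + real_of_int k * (p2 - 1)"
      by (simp add: algebra_simps)
    also have "2 powr \<dots> = 2 powr (p2 + 1) * 2 powr (real_of_int k * (p2 - 1))" by (rule powr_add)
    finally show ?thesis .
  qed
  also have "ennreal (2 powr (p2 + 1) * 2 powr (real_of_int k * (p2 - 1))) * X
       = ennreal (2 powr (p2 + 1)) * (ennreal (2 powr (real_of_int k * (p2 - 1))) * X)"
    by (subst ennreal_mult) (auto simp: mult.assoc)
  also have "ennreal (2 powr (real_of_int k * (p2 - 1))) * X = (\<integral>\<^sup>+x\<in>P. psi k x \<partial>lebesgue)"
    unfolding X_def psi_def lam_def
    by (subst nn_integral_cmult[symmetric]) (auto simp: mult.assoc)
  finally show ?thesis unfolding W_def .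
qed

end



context mainloc
begin

definition KK :: real where
  "KK = 2 powr (p2 + 1) * (2 powr (p2 - 1) / (1 - 2 powr (1 - p2)))"

lemma KK_pos: "0 < KK"
proof -
  have "2 powr (1 - p2) < 1" using p2 by (simp add: powr_less_one)
  then show ?thesis unfolding KK_def by simp
qed

definition NN :: ennreal where "NN = (\<integral>\<^sup>+x. ennreal (\<bar>f x\<bar> powr p2 * s2 x) \<partial>lebesgue)"

lemma II_mem: "i \<in> II \<Longrightarrow> snd i \<in> Sk (fst i)" unfolding II_def by auto

lemma psi_sum_pt:
  "(\<integral>\<^sup>+i. psi (fst i) x * indicator (snd i) x \<partial>count_space II)
    \<le> ennreal (2 powr (p2 - 1) / (1 - 2 powr (1 - p2))) * ennreal (\<bar>f x\<bar> powr p2 * s2 x)"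
proof -
  define Ix where "Ix = {i\<in>II. x \<in> snd i}"
  have "(\<integral>\<^sup>+i. psi (fst i) x * indicator (snd i) x \<partial>count_space II) = (\<integral>\<^sup>+i. psi (fst i) x \<partial>count_space Ix)"
    unfolding Ix_def by (rule count_space_restrict)
  also have "\<dots> = (\<integral>\<^sup>+k. psi k x \<partial>count_space (fst ` Ix))"
  proof (rule nn_integral_bij_count_space)
    have "inj_on fst Ix"
    proof (rule inj_onI)
      fix i j assume ij: "i \<in> Ix" "j \<in> Ix" "fst i = fst j"
      then have m: "i \<in> II" "j \<in> II" "x \<in> snd i" "x \<in> snd j" unfolding Ix_def by auto
      have A: "snd i \<in> Sk (fst i)" using II_mem m(1) .
      have B: "snd j \<in> Sk (fst i)" using II_mem[OF m(2)] ij(3) by metis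
      have "snd i = snd j" using A B m(3,4) by (rule Sk_disj)
      then show "i = j" using ij(3) by (simp add: prod_eq_iff)
    qed
    then show "bij_betw fst Ix (fst ` Ix)" by (rule inj_on_imp_bij_betw)
  qed
  also have "\<dots> \<le> (\<integral>\<^sup>+k. psi k x \<partial>count_space UNIV)" by (rule count_space_mono_set) simp
  also have "\<dots> \<le> ennreal (2 powr (p2 - 1) / (1 - 2 powr (1 - p2))) * ennreal (\<bar>f x\<bar> powr p2 * s2 x)"
    unfolding psi_def using geom_bound[OF p2, of "\<bar>f x\<bar>" "s2 x"] s2nn[of x] by simp
  finally show ?thesis .
qed

lemma sumA:
  "(\<integral>\<^sup>+i. ennreal (2 powr (real_of_int (fst i + 1) * p2)) * wmeas s2 (snd i) \<partial>count_space II)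
   \<le> ennreal KK * NN"
proof -
  have "(\<integral>\<^sup>+i. ennreal (2 powr (real_of_int (fst i + 1) * p2)) * wmeas s2 (snd i) \<partial>count_space II)
     \<le> (\<integral>\<^sup>+i. ennreal (2 powr (p2 + 1)) * (\<integral>\<^sup>+x. psi (fst i) x * indicator (snd i) x \<partial>lebesgue) \<partial>count_space II)"
  proof (rule nn_integral_mono)
    fix i assume "i \<in> space (count_space II)"
    then have "snd i \<in> Sk (fst i)" using II_mem by simp
    then show "ennreal (2 powr (real_of_int (fst i + 1) * p2)) * wmeas s2 (snd i)
       \<le> ennreal (2 powr (p2 + 1)) * (\<integral>\<^sup>+x. psi (fst i) x * indicator (snd i) x \<partial>lebesgue)"
      by (rule weak_P)
  qed
  also have "\<dots> = ennreal (2 powr (p2 + 1)) * (\<integral>\<^sup>+i. (\<integral>\<^sup>+x. psi (fst i) x * indicator (snd i) x \<partial>lebesgue) \<partial>count_space II)"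
    by (rule nn_integral_cmult) simp
  also have "(\<integral>\<^sup>+i. (\<integral>\<^sup>+x. psi (fst i) x * indicator (snd i) x \<partial>lebesgue) \<partial>count_space II)
      = (\<integral>\<^sup>+x. (\<integral>\<^sup>+i. psi (fst i) x * indicator (snd i) x \<partial>count_space II) \<partial>lebesgue)"
  proof (rule nn_integral_count_space_nn_integral[symmetric])
    show "countable II" by (rule II_countable)
    fix i assume "i \<in> II"
    then have [measurable]: "snd i \<in> sets lebesgue" using II_mem Sk_D dg_sets[OF dg] by blast
    show "(\<lambda>x. psi (fst i) x * indicator (snd i) x) \<in> borel_measurable lebesgue" by measurable
  qed
  also have "\<dots> \<le> (\<integral>\<^sup>+x. ennreal (2 powr (p2 - 1) / (1 - 2 powr (1 - p2))) * ennreal (\<bar>f x\<bar> powr p2 * s2 x) \<partial>lebesgue)"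
    by (intro nn_integral_mono psi_sum_pt)
  also have "\<dots> = ennreal (2 powr (p2 - 1) / (1 - 2 powr (1 - p2))) * NN"
    unfolding NN_def by (rule nn_integral_cmult) measurable
  finally have "(\<integral>\<^sup>+i. ennreal (2 powr (real_of_int (fst i + 1) * p2)) * wmeas s2 (snd i) \<partial>count_space II)
     \<le> ennreal (2 powr (p2 + 1)) * (ennreal (2 powr (p2 - 1) / (1 - 2 powr (1 - p2))) * NN)"
    by (simp add: mult_left_mono)
  also have "\<dots> = ennreal KK * NN"
  proof -
    have "2 powr (1 - p2) < 1" using p2 by (simp add: powr_less_one)
    then have "ennreal (2 powr (p2 + 1)) * ennreal (2 powr (p2 - 1) / (1 - 2 powr (1 - p2))) = ennreal KK"
      unfolding KK_def by (subst ennreal_mult[symmetric]) auto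
    then show ?thesis by (simp add: mult.assoc[symmetric])
  qed
  finally show ?thesis .
qed

end



lemma epowr_indicator: "0 < q \<Longrightarrow> epowr (indicator A x) q = indicator A x"
  by (cases "x \<in> A") (auto simp: epowr_ennreal[of 1, simplified])

context mainloc
begin

definition Fi :: "int \<times> (real^'n) set \<Rightarrow> real^'n \<Rightarrow> ennreal" where
  "Fi i x = epowr (ennreal (2 powr real_of_int (fst i + 1))) q * (epowr (MD (snd i) x) q * ennreal (v x) * indicator (snd i) x)"

lemma step1_pt:
  "epowr (bmax_frac_dyadic D \<alpha> (\<lambda>y. indicator R y * s1 y) (\<lambda>y. f y * s2 y) x) q * ennreal (v x) * indicator R x
   \<le> (\<integral>\<^sup>+i. Fi i x \<partial>count_space II)"
proof (cases "x \<in> R")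
  case True
  have "epowr (bmax_frac_dyadic D \<alpha> (\<lambda>y. indicator R y * s1 y) (\<lambda>y. f y * s2 y) x) q \<le> epowr (Phi x) q"
    using B_le_Phi[OF True] q0 by (rule epowr_mono)
  also have "\<dots> \<le> (\<integral>\<^sup>+i. epowr (ennreal (2 powr real_of_int (fst i + 1)) * MD (snd i) x * indicator (snd i) x) q \<partial>count_space II)"
    unfolding Phi_def using q0 by (rule epowr_SUP_le_sum)
  finally have "epowr (bmax_frac_dyadic D \<alpha> (\<lambda>y. indicator R y * s1 y) (\<lambda>y. f y * s2 y) x) q * ennreal (v x)
     \<le> (\<integral>\<^sup>+i. epowr (ennreal (2 powr real_of_int (fst i + 1)) * MD (snd i) x * indicator (snd i) x) q \<partial>count_space II) * ennreal (v x)"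
    by (rule mult_right_mono) simp
  also have "\<dots> = (\<integral>\<^sup>+i. epowr (ennreal (2 powr real_of_int (fst i + 1)) * MD (snd i) x * indicator (snd i) x) q * ennreal (v x) \<partial>count_space II)"
    by (rule nn_integral_multc[symmetric]) simp
  also have "\<dots> = (\<integral>\<^sup>+i. Fi i x \<partial>count_space II)"
    unfolding Fi_def using q0 by (intro nn_integral_cong) (simp add: epowr_mult epowr_indicator mult_ac)
  finally show ?thesis using True by simp
qed simp

lemma Fi_int:
  assumes i: "i \<in> II"
  shows "(\<integral>\<^sup>+x. Fi i x \<partial>lebesgue) \<le> epowr TT q * epowr (wmeas s1 R) (q / p1)
           * epowr (ennreal (2 powr (real_of_int (fst i + 1) * p2)) * wmeas s2 (snd i)) (q / p2)"
proof -
  obtain k P where kP: "i = (k, P)" by (cases i)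
  have P: "P \<in> Sk k" using II_mem[OF i] kP by simp
  have PD: "P \<in> D" using Sk_D[OF P] .
  have [measurable]: "P \<in> sets lebesgue" using dg_sets[OF dg PD] .
  define c where "c = epowr (ennreal (2 powr real_of_int (k + 1))) q"
  have "(\<integral>\<^sup>+x. Fi i x \<partial>lebesgue) = c * (\<integral>\<^sup>+x\<in>P. epowr (MD P x) q * ennreal (v x) \<partial>lebesgue)"
    unfolding Fi_def kP c_def by (subst nn_integral_cmult) auto
  also have "\<dots> \<le> c * (epowr TT q * epowr (wmeas s1 P) (q / p1) * epowr (wmeas s2 P) (q / p2))"
    by (rule mult_left_mono[OF testing_P[OF PD]]) simp
  also have "\<dots> \<le> c * (epowr TT q * epowr (wmeas s1 R) (q / p1) * epowr (wmeas s2 P) (q / p2))"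
  proof -
    have "wmeas s1 P \<le> wmeas s1 R" unfolding wmeas_def using Sk_R[OF P]
      by (intro nn_integral_mono) (auto simp: indicator_def)
    then have "epowr (wmeas s1 P) (q / p1) \<le> epowr (wmeas s1 R) (q / p1)" using q0 p1 by (intro epowr_mono) auto
    then show ?thesis by (intro mult_left_mono mult_right_mono) auto
  qed
  also have "\<dots> = epowr TT q * epowr (wmeas s1 R) (q / p1) * (c * epowr (wmeas s2 P) (q / p2))"
    by (simp add: mult_ac)
  also have "c * epowr (wmeas s2 P) (q / p2) = epowr (ennreal (2 powr (real_of_int (k + 1) * p2)) * wmeas s2 P) (q / p2)"
  proof -
    have "c = epowr (ennreal (2 powr (real_of_int (k + 1) * p2))) (q / p2)"
      unfolding c_def using p2 by (simp add: epowr_ennreal powr_powr)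
    then show ?thesis using q0 p2 by (simp add: epowr_mult)
  qed
  finally show ?thesis using kP by simp
qed

lemma final_bound:
  "epowr (\<integral>\<^sup>+x\<in>R. epowr (bmax_frac_dyadic D \<alpha> (\<lambda>y. indicator R y * s1 y) (\<lambda>y. f y * s2 y) x) q * ennreal (v x) \<partial>lebesgue) (1/q)
   \<le> ennreal (KK powr (1/p2)) * TT * epowr (wmeas s1 R) (1/p1) * epowr NN (1/p2)"
proof -
  define c where "c = epowr TT q * epowr (wmeas s1 R) (q / p1)"
  define a where "a i = ennreal (2 powr (real_of_int (fst i + 1) * p2)) * wmeas s2 (snd i)" for i :: "int \<times> (real^'n) set"
  have "(\<integral>\<^sup>+x\<in>R. epowr (bmax_frac_dyadic D \<alpha> (\<lambda>y. indicator R y * s1 y) (\<lambda>y. f y * s2 y) x) q * ennreal (v x) \<partial>lebesgue)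
     \<le> (\<integral>\<^sup>+x. (\<integral>\<^sup>+i. Fi i x \<partial>count_space II) \<partial>lebesgue)"
    by (intro nn_integral_mono step1_pt)
  also have "\<dots> = (\<integral>\<^sup>+i. (\<integral>\<^sup>+x. Fi i x \<partial>lebesgue) \<partial>count_space II)"
  proof (rule nn_integral_count_space_nn_integral)
    show "countable II" by (rule II_countable)
    fix i assume "i \<in> II"
    then have [measurable]: "snd i \<in> sets lebesgue" using II_mem Sk_D dg_sets[OF dg] by blast
    show "Fi i \<in> borel_measurable lebesgue" unfolding Fi_def by measurable
  qed
  also have "\<dots> \<le> (\<integral>\<^sup>+i. c * epowr (a i) (q / p2) \<partial>count_space II)"
  proof (rule nn_integral_mono)
    fix i assume "i \<in> space (count_space II)"
    then have "i \<in> II" by simp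
    then show "(\<integral>\<^sup>+x. Fi i x \<partial>lebesgue) \<le> c * epowr (a i) (q / p2)"
      unfolding c_def a_def by (rule Fi_int)
  qed
  also have "\<dots> = c * (\<integral>\<^sup>+i. epowr (a i) (q / p2) \<partial>count_space II)"
    by (rule nn_integral_cmult) simp
  also have "\<dots> \<le> c * epowr (\<integral>\<^sup>+i. a i \<partial>count_space II) (q / p2)"
    using q p2 by (intro mult_left_mono sum_pow) auto
  also have "\<dots> \<le> c * epowr (ennreal KK * NN) (q / p2)"
    using sumA q0 p2 unfolding a_def by (intro mult_left_mono epowr_mono) auto
  finally have L: "(\<integral>\<^sup>+x\<in>R. epowr (bmax_frac_dyadic D \<alpha> (\<lambda>y. indicator R y * s1 y) (\<lambda>y. f y * s2 y) x) q * ennreal (v x) \<partial>lebesgue)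
     \<le> c * epowr (ennreal KK * NN) (q / p2)" .
  have "epowr (\<integral>\<^sup>+x\<in>R. epowr (bmax_frac_dyadic D \<alpha> (\<lambda>y. indicator R y * s1 y) (\<lambda>y. f y * s2 y) x) q * ennreal (v x) \<partial>lebesgue) (1/q)
     \<le> epowr (c * epowr (ennreal KK * NN) (q / p2)) (1/q)"
    using L q0 by (intro epowr_mono) auto
  also have "\<dots> = TT * epowr (wmeas s1 R) (1/p1) * (ennreal (KK powr (1/p2)) * epowr NN (1/p2))"
    unfolding c_def using q0 p1 p2 KK_pos
    by (simp add: epowr_mult epowr_epowr epowr_ennreal powr_powr)
  also have "\<dots> = ennreal (KK powr (1/p2)) * TT * epowr (wmeas s1 R) (1/p1) * epowr NN (1/p2)"
    by (simp add: mult_ac)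
  finally show ?thesis .
qed

end

theorem lemma3p1:
  fixes \<alpha> p1 p2 p q :: real
  assumes "0 \<le> \<alpha>" and "\<alpha> < 2 * real CARD('n)"
    and "1 < p1" and "1 < p2"
    and "1 / p = 1 / p1 + 1 / p2"
    and "1 / q = 1 / p - \<alpha> / real CARD('n)"
    and "p2 \<le> q"
  shows "\<exists>C>0. \<forall>(w1 :: real^'n \<Rightarrow> real) w2 v D R f.
           weight w1 \<and> weight w2 \<and> weight v \<and>
           weight (\<lambda>x. w1 x powr (1 - dual_exp p1)) \<and>
           weight (\<lambda>x. w2 x powr (1 - dual_exp p2)) \<and>
           (AE x in lebesgue. 0 < w1 x) \<and> (AE x in lebesgue. 0 < w2 x) \<and>
           dyadic_grid D \<and> R \<in> D \<and>
           f \<in> borel_measurable lebesgue \<and> (\<forall>x. x \<notin> R \<longrightarrow> f x = 0)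
           \<longrightarrow>
           epowr (\<integral>\<^sup>+ x\<in>R. epowr (bmax_frac_dyadic D \<alpha>
                       (\<lambda>y. indicator R y * w1 y powr (1 - dual_exp p1))
                       (\<lambda>y. f y * w2 y powr (1 - dual_exp p2)) x) q * ennreal (v x) \<partial>lebesgue) (1/q)
           \<le> ennreal C * testing_const \<alpha> p1 p2 q
                 (\<lambda>x. w1 x powr (1 - dual_exp p1)) (\<lambda>x. w2 x powr (1 - dual_exp p2)) v
               * epowr (wmeas (\<lambda>x. w1 x powr (1 - dual_exp p1)) R) (1/p1)
               * wLp_norm p2 (\<lambda>x. w2 x powr (1 - dual_exp p2)) f"
proof -
  define C where "C = (2 powr (p2 + 1) * (2 powr (p2 - 1) / (1 - 2 powr (1 - p2)))) powr (1/p2)"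
  have "2 powr (1 - p2) < 1" using assms(4) by (simp add: powr_less_one)
  then have Cpos: "0 < C" unfolding C_def using assms(4) by simp
  show ?thesis
  proof (intro exI[of _ C] conjI allI impI Cpos)
    fix w1 w2 v :: "real^'n \<Rightarrow> real" and D R and f :: "real^'n \<Rightarrow> real"
    assume H: "weight w1 \<and> weight w2 \<and> weight v \<and>
           weight (\<lambda>x. w1 x powr (1 - dual_exp p1)) \<and>
           weight (\<lambda>x. w2 x powr (1 - dual_exp p2)) \<and>
           (AE x in lebesgue. 0 < w1 x) \<and> (AE x in lebesgue. 0 < w2 x) \<and>
           dyadic_grid D \<and> R \<in> D \<and>
           f \<in> borel_measurable lebesgue \<and> (\<forall>x. x \<notin> R \<longrightarrow> f x = 0)"
    interpret mainloc \<alpha> q p1 p2 "\<lambda>x. w1 x powr (1 - dual_exp p1)" "\<lambda>x. w2 x powr (1 - dual_exp p2)" v f D R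
      using assms H by unfold_locales auto
    show "epowr (\<integral>\<^sup>+ x\<in>R. epowr (bmax_frac_dyadic D \<alpha>
                       (\<lambda>y. indicator R y * w1 y powr (1 - dual_exp p1))
                       (\<lambda>y. f y * w2 y powr (1 - dual_exp p2)) x) q * ennreal (v x) \<partial>lebesgue) (1/q)
           \<le> ennreal C * testing_const \<alpha> p1 p2 q
                 (\<lambda>x. w1 x powr (1 - dual_exp p1)) (\<lambda>x. w2 x powr (1 - dual_exp p2)) v
               * epowr (wmeas (\<lambda>x. w1 x powr (1 - dual_exp p1)) R) (1/p1)
               * wLp_norm p2 (\<lambda>x. w2 x powr (1 - dual_exp p2)) f"
      using final_bound unfolding TT_def NN_def wLp_norm_def KK_def C_def by simp
  qed
qed

end
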